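(* Let $A\in\mathbb{R}^{m\times n}_+$ with every row containing a positive entry, $n\ge2$, $(r,c)\in\mathbb{R}^m_{+}\times\mathbb{R}^n_{+}$ with $\langle r,1_m\rangle=\langle c,1_n\rangle$, and $y\in\mathbb{R}^n_{++}$. Order the indices so that $c^{A,r}(y)-c$ is non-decreasing, and let $T$ be a prefix set $\{1,\dots,k\}$, $1\le k\le n-1$, with maximum margin $\gamma$ among such prefix sets. Then \[\gamma^2\ge\frac{1}{2n^3}\|c^{A,r}(y)-c\|_2^2.\]
   Context: For $y\in\mathbb{R}^n_{++}$, $c^{A,r}_j(y):=\sum_{i\in[m]}r_i\frac{A_{ij}y_j}{\sum_{k\in[n]}A_{ik}y_k}$. The margin of $T\subseteq[n]$ is the largest $\gamma\ge0$ such that some $\nu\in\mathbb{R}$ satisfies $\max_{j\in T}(c^{A,r}_j(y)-c_j)\le\nu-\gamma\le\nu+\gamma\le\min_{j\notin T}(c^{A,r}_j(y)-c_j)$. *)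

theory Defs
  imports Complex_Main "HOL-Combinatorics.Permutations"
begin

text \<open>Vectors in R^m, R^n are functions nat => real on index sets {..<m}, {..<n};
  the matrix A is a function nat => nat => real on {..<m} x {..<n}.\<close>

definition cAr :: "nat \<Rightarrow> nat \<Rightarrow> (nat \<Rightarrow> nat \<Rightarrow> real) \<Rightarrow> (nat \<Rightarrow> real) \<Rightarrow> (nat \<Rightarrow> real) \<Rightarrow> nat \<Rightarrow> real" where
  "cAr m n A r y j = (\<Sum>i<m. r i * (A i j * y j) / (\<Sum>k<n. A i k * y k))"

definition margin :: "nat \<Rightarrow> (nat \<Rightarrow> real) \<Rightarrow> nat set \<Rightarrow> real" where
  "margin n d T = (GREATEST \<gamma>::real. \<gamma> \<ge> 0 \<and> (\<exists>\<nu>::real.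
       (\<forall>j\<in>T. d j \<le> \<nu> - \<gamma>) \<and> \<nu> - \<gamma> \<le> \<nu> + \<gamma> \<and>
       (\<forall>j\<in>{..<n} - T. \<nu> + \<gamma> \<le> d j)))"

end

theory Submission
  imports Defs
begin

lemma margin_prefix:
  fixes d :: "nat \<Rightarrow> real"
  assumes perm: "\<sigma> permutes {..<n}"
    and sorted: "\<forall>a<n. \<forall>b<n. a \<le> b \<longrightarrow> d (\<sigma> a) \<le> d (\<sigma> b)"
    and k: "1 \<le> k" "k \<le> n - 1"
  shows "margin n d (\<sigma> ` {..<k}) = (d (\<sigma> k) - d (\<sigma> (k - 1))) / 2"
proof -
  let ?g = "d (\<sigma> k) - d (\<sigma> (k - 1))"
  have kn: "k < n" "k - 1 < n" using k by auto
  have inj: "inj \<sigma>" using perm by (simp add: permutes_inj)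
  have img: "\<sigma> ` {..<n} = {..<n}" using perm by (simp add: permutes_image)
  have g0: "0 \<le> ?g" using sorted kn by auto
  define P where "P = (\<lambda>\<gamma>::real. \<gamma> \<ge> 0 \<and> (\<exists>\<nu>::real.
       (\<forall>j\<in>\<sigma> ` {..<k}. d j \<le> \<nu> - \<gamma>) \<and> \<nu> - \<gamma> \<le> \<nu> + \<gamma> \<and>
       (\<forall>j\<in>{..<n} - \<sigma> ` {..<k}. \<nu> + \<gamma> \<le> d j)))"
  have "P (?g / 2)"
    unfolding P_def
  proof (intro conjI exI[of _ "(d (\<sigma> (k - 1)) + d (\<sigma> k)) / 2"] ballI)
    show "0 \<le> ?g / 2" using g0 by simp
    show "(d (\<sigma> (k - 1)) + d (\<sigma> k)) / 2 - ?g / 2 \<le> (d (\<sigma> (k - 1)) + d (\<sigma> k)) / 2 + ?g / 2"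
      using g0 by (simp add: field_simps)
  next
    fix j assume "j \<in> \<sigma> ` {..<k}"
    then obtain a where a: "a < k" "j = \<sigma> a" by auto
    have "d (\<sigma> a) \<le> d (\<sigma> (k - 1))" using sorted a kn by auto
    then show "d j \<le> (d (\<sigma> (k - 1)) + d (\<sigma> k)) / 2 - ?g / 2" using a by (simp add: field_simps)
  next
    fix j assume j: "j \<in> {..<n} - \<sigma> ` {..<k}"
    then obtain b where b: "b < n" "j = \<sigma> b" using img by (metis DiffD1 imageE lessThan_iff)
    have "b \<ge> k" using j b by auto
    then have "d (\<sigma> k) \<le> d (\<sigma> b)" using sorted b kn by auto
    then show "(d (\<sigma> (k - 1)) + d (\<sigma> k)) / 2 + ?g / 2 \<le> d j" using b by (simp add: field_simps)
  qed
  moreover have "\<gamma> \<le> ?g / 2" if "P \<gamma>" for \<gamma>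
  proof -
    from that obtain \<nu> where h: "\<forall>j\<in>\<sigma> ` {..<k}. d j \<le> \<nu> - \<gamma>"
      "\<forall>j\<in>{..<n} - \<sigma> ` {..<k}. \<nu> + \<gamma> \<le> d j" unfolding P_def by blast
    have "\<sigma> (k - 1) \<in> \<sigma> ` {..<k}" using k by auto
    moreover have "\<sigma> k \<in> {..<n} - \<sigma> ` {..<k}"
      using kn img inj by (auto simp: inj_eq)
    ultimately have "d (\<sigma> (k - 1)) \<le> \<nu> - \<gamma>" "\<nu> + \<gamma> \<le> d (\<sigma> k)" using h by blast+
    then show ?thesis by (simp add: field_simps)
  qed
  ultimately have "(GREATEST \<gamma>. P \<gamma>) = ?g / 2" by (intro Greatest_equality) auto
  then show ?thesis unfolding margin_def P_def by simp
qed

lemma sum_zero: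
  assumes A_nonneg: "\<forall>i<m. \<forall>j<n. A i j \<ge> 0"
    and A_rows: "\<forall>i<m. \<exists>j<n. A i j > 0"
    and balance: "(\<Sum>i<m. r i) = (\<Sum>j<n. c j)"
    and y_pos: "\<forall>j<n. y j > 0"
  shows "(\<Sum>j<n. cAr m n A r y j - c j) = 0"
proof -
  have S: "(\<Sum>k<n. A i k * y k) > 0" if im: "i < m" for i
  proof -
    obtain j where j: "j < n" "A i j > 0" using A_rows im by blast
    show ?thesis
      by (rule sum_pos2[of _ j]) (use j A_nonneg y_pos that in auto)
  qed
  have "(\<Sum>j<n. cAr m n A r y j) = (\<Sum>i<m. \<Sum>j<n. r i * (A i j * y j) / (\<Sum>k<n. A i k * y k))"
    unfolding cAr_def by (rule sum.swap)
  also have "\<dots> = (\<Sum>i<m. r i)"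
  proof (rule sum.cong[OF refl])
    fix i assume "i \<in> {..<m}"
    then have s: "(\<Sum>k<n. A i k * y k) > 0" using S by auto
    have "(\<Sum>j<n. r i * (A i j * y j) / (\<Sum>k<n. A i k * y k))
        = r i * (\<Sum>j<n. A i j * y j) / (\<Sum>k<n. A i k * y k)"
      by (simp add: sum_divide_distrib[symmetric] sum_distrib_left)
    also have "\<dots> = r i" using s by simp
    finally show "(\<Sum>j<n. r i * (A i j * y j) / (\<Sum>k<n. A i k * y k)) = r i" .
  qed
  finally show ?thesis using balance by (simp add: sum_subtractf)
qed

theorem proposition6p5:
  fixes m n :: nat and A :: "nat \<Rightarrow> nat \<Rightarrow> real" and r c y :: "nat \<Rightarrow> real"
    and \<sigma> :: "nat \<Rightarrow> nat" and k :: nat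
  assumes A_nonneg: "\<forall>i<m. \<forall>j<n. A i j \<ge> 0"
    and A_rows: "\<forall>i<m. \<exists>j<n. A i j > 0"
    and n2: "n \<ge> 2"
    and r_nonneg: "\<forall>i<m. r i \<ge> 0"
    and c_nonneg: "\<forall>j<n. c j \<ge> 0"
    and balance: "(\<Sum>i<m. r i) = (\<Sum>j<n. c j)"
    and y_pos: "\<forall>j<n. y j > 0"
    and \<sigma>_perm: "\<sigma> permutes {..<n}"
    and \<sigma>_sorted: "\<forall>a<n. \<forall>b<n. a \<le> b \<longrightarrow>
        cAr m n A r y (\<sigma> a) - c (\<sigma> a) \<le> cAr m n A r y (\<sigma> b) - c (\<sigma> b)"
    and k_range: "1 \<le> k" "k \<le> n - 1"
    and k_max: "\<forall>k'. 1 \<le> k' \<and> k' \<le> n - 1 \<longrightarrow>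
        margin n (\<lambda>j. cAr m n A r y j - c j) (\<sigma> ` {..<k'})
          \<le> margin n (\<lambda>j. cAr m n A r y j - c j) (\<sigma> ` {..<k})"
  shows "(margin n (\<lambda>j. cAr m n A r y j - c j) (\<sigma> ` {..<k}))\<^sup>2
           \<ge> (\<Sum>j<n. (cAr m n A r y j - c j)\<^sup>2) / (2 * real n ^ 3)"
proof -
  define d where "d = (\<lambda>j. cAr m n A r y j - c j)"
  define e where "e = (\<lambda>a. d (\<sigma> a))"
  define g where "g = e k - e (k - 1)"
  have sorted: "\<forall>a<n. \<forall>b<n. a \<le> b \<longrightarrow> e a \<le> e b" using \<sigma>_sorted unfolding e_def d_def by simp
  have mk: "margin n d (\<sigma> ` {..<k}) = g / 2"
    unfolding g_def e_def by (rule margin_prefix[OF \<sigma>_perm _ k_range]) (use \<sigma>_sorted d_def in simp)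
  have gaps: "e (a + 1) - e a \<le> g" if "a + 1 < n" for a
  proof -
    have "margin n d (\<sigma> ` {..<a+1}) = (e (a+1) - e a) / 2"
      using margin_prefix[OF \<sigma>_perm _, of d "a+1"] \<sigma>_sorted that unfolding e_def d_def by auto
    moreover have "margin n d (\<sigma> ` {..<a+1}) \<le> margin n d (\<sigma> ` {..<k})"
      using k_max that unfolding d_def by auto
    ultimately show ?thesis using mk by simp
  qed
  have g0: "0 \<le> g" unfolding g_def using sorted k_range n2 by auto
  have lin: "b < n \<Longrightarrow> e b - e 0 \<le> real b * g" for b
  proof (induction b)
    case 0 then show ?case by simp
  next
    case (Suc b)
    then have "e (b + 1) - e b \<le> g" using gaps by simp
    with Suc show ?case by (simp add: algebra_simps)
  qed
  define R where "R = e (n - 1) - e 0"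
  define M where "M = (e 0 + e (n - 1)) / 2"
  have R: "R \<le> real (n - 1) * g" unfolding R_def using lin[of "n-1"] n2 by (simp add: of_nat_diff)
  have R0: "0 \<le> R" unfolding R_def using sorted n2 by auto
  have bij: "bij_betw \<sigma> {..<n} {..<n}" using \<sigma>_perm by (simp add: permutes_imp_bij)
  have sumd: "(\<Sum>j<n. d j) = 0" unfolding d_def by (rule sum_zero[OF A_nonneg A_rows balance y_pos])
  have sume: "(\<Sum>a<n. e a) = 0" unfolding e_def using sumd sum.reindex_bij_betw[OF bij, of d] by simp
  have sumsq: "(\<Sum>j<n. (d j)\<^sup>2) = (\<Sum>a<n. (e a)\<^sup>2)"
    unfolding e_def using sum.reindex_bij_betw[OF bij, of "\<lambda>j. (d j)\<^sup>2"] by simp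
  have "(\<Sum>a<n. (e a - M)\<^sup>2) = (\<Sum>a<n. (e a)\<^sup>2) - 2 * M * (\<Sum>a<n. e a) + real n * M\<^sup>2"
    by (simp add: power2_diff sum.distrib sum_subtractf sum_distrib_left algebra_simps)
  then have "(\<Sum>a<n. (e a)\<^sup>2) \<le> (\<Sum>a<n. (e a - M)\<^sup>2)" using sume by simp
  also have "\<dots> \<le> (\<Sum>a<n. (R / 2)\<^sup>2)"
  proof (rule sum_mono)
    fix a assume "a \<in> {..<n}"
    then have "e 0 \<le> e a" "e a \<le> e (n - 1)" using sorted by auto
    then have "\<bar>e a - M\<bar> \<le> R / 2" unfolding M_def R_def by (auto simp: abs_le_iff field_simps)
    then show "(e a - M)\<^sup>2 \<le> (R / 2)\<^sup>2"
      by (metis abs_ge_zero abs_le_square_iff abs_of_nonneg order_trans power2_abs)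
  qed
  also have "\<dots> = real n * R\<^sup>2 / 4" by (simp add: power_divide)
  also have "\<dots> \<le> real n * (real n * g)\<^sup>2 / 4"
  proof -
    have "real (n - 1) * g \<le> real n * g" using g0 by (intro mult_right_mono) auto
    then have "R \<le> real n * g" using R by linarith
    then have "R\<^sup>2 \<le> (real n * g)\<^sup>2" using R0 by (simp add: power_mono)
    then show ?thesis by (simp add: divide_right_mono mult_left_mono)
  qed
  finally have S: "(\<Sum>a<n. (e a)\<^sup>2) \<le> real n ^ 3 * g\<^sup>2 / 4"
    by (simp add: power_mult_distrib power3_eq_cube power2_eq_square algebra_simps)
  have np: "0 < 2 * real n ^ 3" using n2 by simp
  have "(\<Sum>a<n. (e a)\<^sup>2) / (2 * real n ^ 3) \<le> (real n ^ 3 * g\<^sup>2 / 4) / (2 * real n ^ 3)"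
    using S np by (intro divide_right_mono) auto
  also have "\<dots> = g\<^sup>2 / 8" using np by (simp add: field_simps)
  also have "\<dots> \<le> (g / 2)\<^sup>2" by (simp add: power_divide)
  finally have "(\<Sum>a<n. (e a)\<^sup>2) / (2 * real n ^ 3) \<le> (margin n d (\<sigma> ` {..<k}))\<^sup>2"
    using mk by (simp only:)
  then show ?thesis using sumsq unfolding d_def by simp
qed

end
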